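(* Let $\mathcal{A} = \{\pm e_1, \ldots, \pm e_n\}$ be the set of signed canonical unit vectors in $\mathbb{R}^n$, so that the atomic norm $\|\cdot\|_{\mathcal{A}}$ is the $\ell_1$ norm. Suppose $x^\star \in \mathbb{R}^n$ has $k$ nonzeros. For $\gamma \in [0,1)$ define the cone $C_\gamma(x^\star,\mathcal{A}) = \operatorname{cone}(\{z : \|x^\star + z\|_{\mathcal{A}} \leq \|x^\star\|_{\mathcal{A}} + \gamma \|z\|_{\mathcal{A}}\})$ and $\phi_\gamma(x^\star,\mathcal{A}) = \inf\left\{ \frac{\|z\|_2}{\|z\|_{\mathcal{A}}} : z \in C_\gamma(x^\star,\mathcal{A}) \right\}.$ Then $\phi_\gamma(x^\star,\mathcal{A}) \geq \frac{1-\gamma}{2\sqrt{k}}$.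
   Context: Atomic norm of a set of atoms $\mathcal{A}$: $\|x\|_{\mathcal{A}} = \inf\{t>0 : x \in t\,\operatorname{conv}(\mathcal{A})\}$. Here $\operatorname{cone}(S)$ denotes the conic hull of a set $S$. The quantity $\phi_\gamma$ is a generalized weak compatibility constant that controls fast MSE rates for atomic norm soft thresholding $\min_x \tfrac12\|x-y\|_2^2 + \tau\|x\|_{\mathcal{A}}$. *)

theory Defs
  imports "HOL-Analysis.Analysis"
begin

definition atomic_norm :: "('a::real_vector) set \<Rightarrow> 'a \<Rightarrow> real" where
  "atomic_norm A x = Inf {t. t > 0 \<and> x \<in> (\<lambda>v. t *\<^sub>R v) ` (convex hull A)}"

definition l1_atoms :: "(real^'n) set" where
  "l1_atoms = {axis i 1 | i. True} \<union> {- axis i 1 | i. True}"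

definition C_gamma :: "('a::real_vector) set \<Rightarrow> 'a \<Rightarrow> real \<Rightarrow> 'a set" where
  "C_gamma A xs \<gamma> = cone hull {z. atomic_norm A (xs + z) \<le> atomic_norm A xs + \<gamma> * atomic_norm A z}"

text \<open>phi_gamma as an extended real infimum (the ratio is taken over nonzero z; empty inf = +infinity).\<close>
definition phi_gamma :: "('a::real_normed_vector) set \<Rightarrow> 'a \<Rightarrow> real \<Rightarrow> ereal" where
  "phi_gamma A xs \<gamma> = Inf {ereal (norm z / atomic_norm A z) | z. z \<in> C_gamma A xs \<gamma> \<and> z \<noteq> 0}"

end

theory Submission
  imports Defs
begin

definition l1n :: "real^'n \<Rightarrow> real" where
  "l1n x = (\<Sum>i\<in>UNIV. \<bar>x $ i\<bar>)"

lemma l1n_convex: "convex {y::real^'n. l1n y \<le> 1}"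
proof (rule convexI)
  fix x y :: "real^'n" and u v :: real
  assume x: "x \<in> {y. l1n y \<le> 1}" and y: "y \<in> {y. l1n y \<le> 1}" and uv: "0 \<le> u" "0 \<le> v" "u + v = 1"
  have "l1n (u *\<^sub>R x + v *\<^sub>R y) \<le> (\<Sum>i\<in>UNIV. u * \<bar>x $ i\<bar> + v * \<bar>y $ i\<bar>)"
    unfolding l1n_def
    by (rule sum_mono) (use uv in \<open>auto simp: abs_mult intro: order_trans[OF abs_triangle_ineq]\<close>)
  also have "\<dots> = u * l1n x + v * l1n y" by (simp add: l1n_def sum.distrib sum_distrib_left)
  also have "\<dots> \<le> u * 1 + v * 1" using x y uv by (intro add_mono mult_left_mono) auto
  finally show "u *\<^sub>R x + v *\<^sub>R y \<in> {y. l1n y \<le> 1}" using uv by simp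
qed

lemma l1n_axis: "l1n (axis i (1::real)) = 1" "l1n (- axis i (1::real)) = 1"
proof -
  have "(\<Sum>j\<in>UNIV. \<bar>axis i (1::real) $ j\<bar>) = 1"
    by (simp add: axis_def sum.delta)
  then show "l1n (axis i (1::real)) = 1" "l1n (- axis i (1::real)) = 1" by (simp_all add: l1n_def)
qed

lemma hull_sub: "convex hull (l1_atoms::(real^'n) set) \<subseteq> {y. l1n y \<le> 1}"
  by (rule hull_minimal) (auto simp: l1_atoms_def l1n_axis l1n_convex)

lemma l1n_scale: "l1n (c *\<^sub>R x) = \<bar>c\<bar> * l1n x"
  by (simp add: l1n_def abs_mult sum_distrib_left)

lemma l1n_nonneg: "l1n x \<ge> 0" by (simp add: l1n_def sum_nonneg)

lemma l1n_zero: "l1n (x::real^'n) = 0 \<longleftrightarrow> x = 0"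
  by (auto simp: l1n_def sum_nonneg_eq_0_iff vec_eq_iff)

lemma in_hull: assumes "l1n (y::real^'n) = 1" shows "y \<in> convex hull l1_atoms"
proof -
  define s where "s i = (if y $ i \<ge> 0 then axis i (1::real) else - axis i 1)" for i
  have "(\<Sum>i\<in>UNIV. \<bar>y $ i\<bar> *\<^sub>R s i) \<in> convex hull l1_atoms"
    by (rule convex_sum) (use assms in \<open>auto simp: l1n_def s_def l1_atoms_def intro!: hull_inc\<close>)
  moreover have "(\<Sum>i\<in>UNIV. \<bar>y $ i\<bar> *\<^sub>R s i) = y"
  proof -
    have "\<And>i. \<bar>y $ i\<bar> *\<^sub>R s i = (y $ i) *s axis i 1"
      by (auto simp: s_def vec_eq_iff axis_def)
    then show ?thesis using basis_expansion[of y] by simp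
  qed
  ultimately show ?thesis by simp
qed

lemma zero_in_hull: "(0::real^'n) \<in> convex hull l1_atoms"
proof -
  obtain i :: 'n where True by simp
  have "(1/2) *\<^sub>R axis i (1::real) + (1/2) *\<^sub>R (- axis i 1) \<in> convex hull l1_atoms"
    by (rule convexD[OF convex_convex_hull]) (auto simp: l1_atoms_def intro!: hull_inc)
  then show ?thesis by simp
qed

lemma atomic_l1: "atomic_norm l1_atoms (x::real^'n) = l1n x"
proof -
  let ?T = "{t. t > 0 \<and> x \<in> (\<lambda>v. t *\<^sub>R v) ` (convex hull l1_atoms)}"
  have low: "l1n x \<le> t" if "t \<in> ?T" for t
  proof -
    from that obtain v where t: "t > 0" and v: "v \<in> convex hull l1_atoms" and xv: "x = t *\<^sub>R v" by auto
    have "l1n v \<le> 1" using v hull_sub by auto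
    then show ?thesis using t xv by (simp add: l1n_scale mult_left_le)
  qed
  show ?thesis
  proof (cases "x = 0")
    case True
    have T: "?T = {0<..}" using True zero_in_hull by (auto intro!: image_eqI[of 0 _ 0])
    show ?thesis unfolding atomic_norm_def T using True by (simp add: l1n_def)
  next
    case False
    let ?t = "l1n x"
    have tp: "?t > 0" using False l1n_zero l1n_nonneg by (metis less_eq_real_def)
    have "(1/?t) *\<^sub>R x \<in> convex hull l1_atoms" using tp by (intro in_hull) (simp add: l1n_scale)
    then have "?t \<in> ?T" using tp by (auto intro!: image_eqI[of x _ "(1/?t) *\<^sub>R x"])
    then have "Inf ?T = ?t"
      by (rule cInf_eq_minimum[OF _ low])
    then show ?thesis by (simp add: atomic_norm_def)
  qed
qed

theorem mainTheorem11:
  fixes xs :: "real^'n" and \<gamma> :: real and k :: nat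
  assumes "k = card {i. xs $ i \<noteq> 0}"
    and "0 \<le> \<gamma>" and "\<gamma> < 1"
  shows "phi_gamma l1_atoms xs \<gamma> \<ge> ereal ((1 - \<gamma>) / (2 * sqrt (real k)))"
proof -
  define S where "S = {i. xs $ i \<noteq> 0}"
  define a where "a z = (\<Sum>i\<in>S. \<bar>z $ i\<bar>)" for z :: "real^'n"
  define b where "b z = (\<Sum>i\<in>-S. \<bar>z $ i\<bar>)" for z :: "real^'n"
  have l1ab: "l1n z = a z + b z" for z
    unfolding l1n_def a_def b_def Compl_eq_Diff_UNIV
    using sum.subset_diff[of S UNIV "\<lambda>i. \<bar>z $ i\<bar>"] by (simp add: add.commute)
  define D where "D = {z. (1 - \<gamma>) * b z \<le> (1 + \<gamma>) * a z}"
  have coneD: "cone D"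
    unfolding cone_def D_def
  proof (intro ballI allI impI)
    fix z c assume z: "z \<in> {z. (1 - \<gamma>) * b z \<le> (1 + \<gamma>) * a z}" and c: "0 \<le> (c::real)"
    have "a (c *\<^sub>R z) = c * a z" "b (c *\<^sub>R z) = c * b z"
      using c by (simp_all add: a_def b_def abs_mult sum_distrib_left)
    then show "c *\<^sub>R z \<in> {z. (1 - \<gamma>) * b z \<le> (1 + \<gamma>) * a z}"
      using z c by simp (metis mult.left_commute mult_left_mono)
  qed
  have subD: "{z. atomic_norm l1_atoms (xs + z) \<le> atomic_norm l1_atoms xs + \<gamma> * atomic_norm l1_atoms z} \<subseteq> D"
  proof
    fix z assume "z \<in> {z. atomic_norm l1_atoms (xs + z) \<le> atomic_norm l1_atoms xs + \<gamma> * atomic_norm l1_atoms z}"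
    then have h: "l1n (xs + z) \<le> l1n xs + \<gamma> * l1n z" by (simp add: atomic_l1)
    have "a (xs + z) \<ge> a xs - a z"
    proof -
      have "a xs - a z = (\<Sum>i\<in>S. \<bar>xs $ i\<bar> - \<bar>z $ i\<bar>)" by (simp add: a_def sum_subtractf)
      also have "\<dots> \<le> a (xs + z)" unfolding a_def
        by (rule sum_mono) (simp add: abs_triangle_ineq2 [of "xs $ _" "- z $ _", simplified] 
            | metis abs_minus_cancel abs_triangle_ineq2 diff_minus_eq_add)+
      finally show ?thesis .
    qed
    moreover have "b (xs + z) = b z" "b xs = 0" by (auto simp: b_def S_def)
    ultimately show "z \<in> D" using h l1ab[of "xs+z"] l1ab[of xs] l1ab[of z] by (simp add: D_def algebra_simps)
  qed
  have CD: "C_gamma l1_atoms xs \<gamma> \<subseteq> D"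
    unfolding C_gamma_def by (rule hull_minimal[where S=cone, OF subD coneD])
  show ?thesis unfolding phi_gamma_def
  proof (rule Inf_greatest, clarify)
    fix z :: "real^'n" assume zC: "z \<in> C_gamma l1_atoms xs \<gamma>" and z0: "z \<noteq> 0"
    have zD: "(1 - \<gamma>) * b z \<le> (1 + \<gamma>) * a z" using zC CD D_def by auto
    have lp: "l1n z > 0" using z0 l1n_zero l1n_nonneg by (metis less_eq_real_def)
    have an: "a z \<ge> 0" "b z \<ge> 0" by (auto simp: a_def b_def sum_nonneg)
    have key1: "(1 - \<gamma>) * l1n z \<le> 2 * a z" using zD l1ab[of z] by (simp add: algebra_simps)
    have cs: "a z \<le> sqrt (real k) * norm z"
    proof -
      have 1: "a z \<le> L2_set (\<lambda>i. z $ i) S * L2_set (\<lambda>i. 1::real) S"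
        using L2_set_mult_ineq[of "\<lambda>i. z $ i" "\<lambda>i. 1" S] by (simp add: a_def)
      have 2: "L2_set (\<lambda>i. 1::real) S = sqrt (real k)"
        by (simp add: L2_set_constant assms(1) S_def)
      have 3: "L2_set (\<lambda>i. z $ i) S \<le> norm z"
        unfolding norm_vec_def L2_set_def
        unfolding real_norm_def power2_abs by (rule real_sqrt_le_mono, rule sum_mono2) auto
      have "L2_set (\<lambda>i. z $ i) S * sqrt (real k) \<le> norm z * sqrt (real k)"
        using 3 by (rule mult_right_mono) simp
      then show ?thesis using 1 2 by (simp add: mult.commute)
    qed
    show "ereal ((1 - \<gamma>) / (2 * sqrt (real k))) \<le> ereal (norm z / atomic_norm l1_atoms z)"
    proof (cases "k = 0")
      case True then show ?thesis using lp by (simp add: atomic_l1)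
    next
      case False
      then have sk: "sqrt (real k) > 0" by simp
      have "(1 - \<gamma>) * l1n z \<le> 2 * sqrt (real k) * norm z" using key1 cs by linarith
      then have "(1 - \<gamma>) / (2 * sqrt (real k)) \<le> norm z / l1n z"
        using sk lp by (simp add: divide_simps mult.commute mult.left_commute)
      then show ?thesis by (simp add: atomic_l1)
    qed
  qed
qed

end
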